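(* For every sufficiently large integer $m$ there is a pseudoexpander with $m$ roots in which every root has pseudodegree at most $m^{1/4.9}$.
   Context: Logarithms are base 2. A rooted tree is extended if none of its leaves has a sibling. A graph $H$ is a binary tree based graph if it is the edge-disjoint union of extended rooted trees $T_1,\dots,T_m$ with roots $t_1,\dots,t_m$ (the roots of $H$, forming ${\bf Roots}(H)$) such that every vertex that is a leaf of some $T_i$ is a leaf of exactly two of the trees, and any two of the trees have at most one common vertex, which is then a leaf of both. $T_i,T_j$ are adjacent if they share a leaf. A pseudoedge is a pair $\{t_i,t_j\}$ with $T_i,T_j$ adjacent; the pseudodegree of $t_i$ is the number of pseudoedges containing $t_i$. A pseudomatching is a set of pairwise disjoint pseudoedges; it is between disjoint $U,V\subseteq{\bf Roots}(H)$ if each of its pseudoedges has one end in $U$ and one in $V$. $H$ is a pseudoexpander (with $m=|{\bf Roots}(H)|$) if (1) each $T_i$ has height (largest number of vertices on a root-leaf path) at most $(\log m)/4.9+3$, and (2) for any two disjoint $U,V\subseteq {\bf Roots}(H)$ with $|U|,|V|\ge m^{0.999}$ there is a pseudomatching between $U$ and $V$ of size at least $m^{0.999}/3$. *)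

theory Defs
  imports Complex_Main
begin

definition rooted_tree :: "'v set \<Rightarrow> ('v \<times> 'v) set \<Rightarrow> 'v \<Rightarrow> bool" where
  "rooted_tree V E r \<longleftrightarrow>
     finite V \<and> r \<in> V \<and> E \<subseteq> V \<times> V \<and>
     (\<forall>u. (u, r) \<notin> E) \<and>
     (\<forall>v \<in> V - {r}. \<exists>!u. (u, v) \<in> E) \<and>
     (\<forall>v \<in> V. (r, v) \<in> E\<^sup>*)"

definition children :: "('v \<times> 'v) set \<Rightarrow> 'v \<Rightarrow> 'v set" where
  "children E u = {w. (u, w) \<in> E}"

definition tree_leaves :: "'v set \<Rightarrow> ('v \<times> 'v) set \<Rightarrow> 'v set" where
  "tree_leaves V E = {v \<in> V. children E v = {}}"

definition extended_tree :: "'v set \<Rightarrow> ('v \<times> 'v) set \<Rightarrow> 'v \<Rightarrow> bool" where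
  "extended_tree V E r \<longleftrightarrow> rooted_tree V E r \<and>
     (\<forall>w \<in> tree_leaves V E. \<forall>u. (u, w) \<in> E \<longrightarrow> children E u = {w})"

text \<open>Height: the largest number of vertices on a root-leaf path.\<close>
definition tree_height :: "'v set \<Rightarrow> ('v \<times> 'v) set \<Rightarrow> 'v \<Rightarrow> nat" where
  "tree_height V E r = Max {length xs | xs. xs \<noteq> [] \<and> hd xs = r \<and>
       last xs \<in> tree_leaves V E \<and> successively (\<lambda>a b. (a, b) \<in> E) xs}"

text \<open>The graph H is given by its decomposition into trees T_i = (Vs i, Es i, rt i),
 i < m, with roots rt i (distinct, so that |Roots(H)| = m).\<close>

definition binary_tree_based ::
  "nat \<Rightarrow> (nat \<Rightarrow> 'v set) \<Rightarrow> (nat \<Rightarrow> ('v \<times> 'v) set) \<Rightarrow> (nat \<Rightarrow> 'v) \<Rightarrow> bool" where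
  "binary_tree_based m Vs Es rt \<longleftrightarrow>
     inj_on rt {..<m} \<and>
     (\<forall>i<m. extended_tree (Vs i) (Es i) (rt i)) \<and>
     \<comment> \<open>edge-disjoint (as undirected edges)\<close>
     (\<forall>i<m. \<forall>j<m. i \<noteq> j \<longrightarrow>
        (\<forall>a b. (a, b) \<in> Es i \<longrightarrow> (a, b) \<notin> Es j \<and> (b, a) \<notin> Es j)) \<and>
     \<comment> \<open>every leaf of some tree is a leaf of exactly two trees\<close>
     (\<forall>i<m. \<forall>v \<in> tree_leaves (Vs i) (Es i).
        card {j. j < m \<and> v \<in> tree_leaves (Vs j) (Es j)} = 2) \<and>
     \<comment> \<open>two trees share at most one vertex, which is a leaf of both\<close>
     (\<forall>i<m. \<forall>j<m. i \<noteq> j \<longrightarrow>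
        (\<forall>v w. v \<in> Vs i \<inter> Vs j \<and> w \<in> Vs i \<inter> Vs j \<longrightarrow> v = w) \<and>
        (\<forall>v \<in> Vs i \<inter> Vs j. v \<in> tree_leaves (Vs i) (Es i) \<and> v \<in> tree_leaves (Vs j) (Es j)))"

definition roots :: "nat \<Rightarrow> (nat \<Rightarrow> 'v) \<Rightarrow> 'v set" where
  "roots m rt = rt ` {..<m}"

definition adjacent_trees ::
  "(nat \<Rightarrow> 'v set) \<Rightarrow> (nat \<Rightarrow> ('v \<times> 'v) set) \<Rightarrow> nat \<Rightarrow> nat \<Rightarrow> bool" where
  "adjacent_trees Vs Es i j \<longleftrightarrow> i \<noteq> j \<and>
     tree_leaves (Vs i) (Es i) \<inter> tree_leaves (Vs j) (Es j) \<noteq> {}"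

definition pseudoedge ::
  "nat \<Rightarrow> (nat \<Rightarrow> 'v set) \<Rightarrow> (nat \<Rightarrow> ('v \<times> 'v) set) \<Rightarrow> (nat \<Rightarrow> 'v) \<Rightarrow> 'v set \<Rightarrow> bool" where
  "pseudoedge m Vs Es rt e \<longleftrightarrow>
     (\<exists>i<m. \<exists>j<m. adjacent_trees Vs Es i j \<and> e = {rt i, rt j})"

definition pseudodegree ::
  "nat \<Rightarrow> (nat \<Rightarrow> 'v set) \<Rightarrow> (nat \<Rightarrow> ('v \<times> 'v) set) \<Rightarrow> (nat \<Rightarrow> 'v) \<Rightarrow> 'v \<Rightarrow> nat" where
  "pseudodegree m Vs Es rt t = card {e. pseudoedge m Vs Es rt e \<and> t \<in> e}"

definition pseudomatching_between ::
  "nat \<Rightarrow> (nat \<Rightarrow> 'v set) \<Rightarrow> (nat \<Rightarrow> ('v \<times> 'v) set) \<Rightarrow> (nat \<Rightarrow> 'v)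
     \<Rightarrow> 'v set \<Rightarrow> 'v set \<Rightarrow> 'v set set \<Rightarrow> bool" where
  "pseudomatching_between m Vs Es rt U W M \<longleftrightarrow>
     (\<forall>e \<in> M. pseudoedge m Vs Es rt e) \<and>
     (\<forall>e \<in> M. \<forall>f \<in> M. e \<noteq> f \<longrightarrow> e \<inter> f = {}) \<and>
     (\<forall>e \<in> M. \<exists>u \<in> U. \<exists>w \<in> W. e = {u, w})"

definition pseudoexpander ::
  "nat \<Rightarrow> (nat \<Rightarrow> 'v set) \<Rightarrow> (nat \<Rightarrow> ('v \<times> 'v) set) \<Rightarrow> (nat \<Rightarrow> 'v) \<Rightarrow> bool" where
  "pseudoexpander m Vs Es rt \<longleftrightarrow>
     binary_tree_based m Vs Es rt \<and>
     (\<forall>i<m. real (tree_height (Vs i) (Es i) (rt i)) \<le> log 2 (real m) / 4.9 + 3) \<and>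
     (\<forall>U W. U \<subseteq> roots m rt \<and> W \<subseteq> roots m rt \<and> U \<inter> W = {} \<and>
        real (card U) \<ge> real m powr 0.999 \<and> real (card W) \<ge> real m powr 0.999 \<longrightarrow>
        (\<exists>M. pseudomatching_between m Vs Es rt U W M \<and>
             real (card M) \<ge> real m powr 0.999 / 3))"

end

theory Submission
  imports Defs "HOL-Combinatorics.Permutations" "HOL-Library.Nat_Bijection" "HOL-Real_Asymp.Real_Asymp"
begin


lemma perm_transitive:
  assumes "finite S" "B \<subseteq> S" "B' \<subseteq> S" "card B = card B'"
  shows "\<exists>\<rho>. \<rho> permutes S \<and> \<rho> ` B = B'"
proof -
  have fB: "finite B" "finite B'" using assms finite_subset by auto
  obtain f where f: "bij_betw f B B'" using finite_same_card_bij[OF fB assms(4)] by blast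
  have "card (S - B) = card (S - B')"
    using assms fB by (simp add: card_Diff_subset)
  then obtain g where g: "bij_betw g (S - B) (S - B')"
    using finite_same_card_bij assms(1) by blast
  define \<rho> where "\<rho> x = (if x \<in> B then f x else if x \<in> S then g x else x)" for x
  have 1: "bij_betw \<rho> B B'" using f by (rule bij_betw_cong[THEN iffD1, rotated]) (simp add: \<rho>_def)
  have 2: "bij_betw \<rho> (S - B) (S - B')" using g by (rule bij_betw_cong[THEN iffD1, rotated]) (simp add: \<rho>_def)
  have "bij_betw \<rho> (B \<union> (S - B)) (B' \<union> (S - B'))"
    by (rule bij_betw_combine[OF 1 2]) auto
  moreover have "B \<union> (S - B) = S" "B' \<union> (S - B') = S" using assms by auto
  ultimately have "bij_betw \<rho> S S" by simp
  moreover have "\<rho> x = x" if "x \<notin> S" for x using that assms by (auto simp: \<rho>_def)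
  ultimately have "\<rho> permutes S" by (rule bij_imp_permutes)
  moreover have "\<rho> ` B = B'" using 1 by (simp add: bij_betw_def)
  ultimately show ?thesis by blast
qed

definition Nc :: "nat \<Rightarrow> nat set \<Rightarrow> nat set \<Rightarrow> (nat \<Rightarrow> nat) set" where
  "Nc m A B = {\<sigma>. \<sigma> permutes {..<m} \<and> \<sigma> ` A \<inter> B = {}}"

lemma finite_perms: "finite {\<sigma>. \<sigma> permutes {..<m::nat}}"
  by (rule finite_permutations) simp

lemma Nc_finite: "finite (Nc m A B)"
  unfolding Nc_def by (rule finite_subset[OF _ finite_perms]) auto

lemma Nc_same:
  assumes "B \<subseteq> {..<m}" "B' \<subseteq> {..<m}" "card B = card B'"
  shows "card (Nc m A B) = card (Nc m A B')"
proof -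
  obtain \<rho> where r: "\<rho> permutes {..<m}" "\<rho> ` B = B'"
    using perm_transitive[of "{..<m}" B B'] assms by auto
  have inj: "inj \<rho>" using r(1) permutes_inj by blast
  have "inj_on (\<lambda>\<sigma>. \<rho> \<circ> \<sigma>) (Nc m A B)"
  proof (rule inj_onI)
    fix s1 s2 assume "\<rho> \<circ> s1 = \<rho> \<circ> s2"
    then show "s1 = s2" by (intro ext) (metis comp_apply inj injD)
  qed
  moreover have "(\<lambda>\<sigma>. \<rho> \<circ> \<sigma>) ` Nc m A B = Nc m A B'"
  proof
    show "(\<lambda>\<sigma>. \<rho> \<circ> \<sigma>) ` Nc m A B \<subseteq> Nc m A B'"
    proof clarify
      fix \<sigma> assume "\<sigma> \<in> Nc m A B"
      then have s: "\<sigma> permutes {..<m}" "\<sigma> ` A \<inter> B = {}" by (auto simp: Nc_def)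
      have "(\<rho> \<circ> \<sigma>) ` A \<inter> B' = \<rho> ` (\<sigma> ` A \<inter> B)"
        by (simp add: image_Int[OF inj] r(2)[symmetric] image_comp)
      then show "\<rho> \<circ> \<sigma> \<in> Nc m A B'" using s r(1) by (simp add: Nc_def permutes_compose)
    qed
  next
    show "Nc m A B' \<subseteq> (\<lambda>\<sigma>. \<rho> \<circ> \<sigma>) ` Nc m A B"
    proof
      fix \<sigma> assume "\<sigma> \<in> Nc m A B'"
      then have s: "\<sigma> permutes {..<m}" "\<sigma> ` A \<inter> B' = {}" by (auto simp: Nc_def)
      have ip: "inv \<rho> permutes {..<m}" using r(1) by (rule permutes_inv)
      have e: "\<rho> \<circ> (inv \<rho> \<circ> \<sigma>) = \<sigma>" using r(1) by (simp add: o_assoc permutes_inverses(1) fun_eq_iff)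
      have "(inv \<rho> \<circ> \<sigma>) ` A \<inter> B = {}"
      proof -
        have "\<rho> ` ((inv \<rho> \<circ> \<sigma>) ` A \<inter> B) = \<sigma> ` A \<inter> B'"
          by (simp add: image_Int[OF inj] r(2)[symmetric] image_comp permutes_inverses(1)[OF r(1)])
        then show ?thesis using s by auto
      qed
      then have "inv \<rho> \<circ> \<sigma> \<in> Nc m A B" using s ip by (simp add: Nc_def permutes_compose)
      then show "\<sigma> \<in> (\<lambda>\<sigma>. \<rho> \<circ> \<sigma>) ` Nc m A B" using e by (metis image_eqI)
    qed
  qed
  ultimately show ?thesis by (metis card_image)
qed

lemma Nc_count:
  assumes A: "A \<subseteq> {..<m}" "card A = s" and B: "B \<subseteq> {..<m}" "card B = s"
  shows "card (Nc m A B) * (m choose s) = fact m * ((m - s) choose s)"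
proof -
  define Sub where "Sub = {B'. B' \<subseteq> {..<m} \<and> card B' = s}"
  define P where "P = {\<sigma>. \<sigma> permutes {..<m::nat}}"
  have fS: "finite Sub" unfolding Sub_def by (rule finite_subset[of _ "Pow {..<m}"]) auto
  have fP: "finite P" unfolding P_def by (rule finite_perms)
  have cS: "card Sub = m choose s" unfolding Sub_def using n_subsets[of "{..<m}" s] by simp
  have cP: "card P = fact m" unfolding P_def by (rule card_permutations) auto
  have eqN: "card {\<sigma> \<in> P. \<sigma> ` A \<inter> B' = {}} = card (Nc m A B)" if "B' \<in> Sub" for B'
  proof -
    have "{\<sigma> \<in> P. \<sigma> ` A \<inter> B' = {}} = Nc m A B'" by (auto simp: P_def Nc_def)
    then show ?thesis using Nc_same[of B' m B A] that B by (simp add: Sub_def)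
  qed
  have eqB: "card {B' \<in> Sub. \<sigma> ` A \<inter> B' = {}} = (m - s) choose s" if "\<sigma> \<in> P" for \<sigma>
  proof -
    have sp: "\<sigma> permutes {..<m}" using that by (simp add: P_def)
    have "\<sigma> ` A \<subseteq> {..<m}" using A(1) permutes_image[OF sp] by blast
    moreover have "card (\<sigma> ` A) = s" using A permutes_inj[OF sp] by (simp add: card_image inj_on_subset)
    ultimately have c: "card ({..<m} - \<sigma> ` A) = m - s" by (simp add: card_Diff_subset finite_subset)
    have "{B' \<in> Sub. \<sigma> ` A \<inter> B' = {}} = {B'. B' \<subseteq> {..<m} - \<sigma> ` A \<and> card B' = s}"
      by (auto simp: Sub_def)
    then show ?thesis using n_subsets[of "{..<m} - \<sigma> ` A" s] c by simp
  qed
  have "(\<Sum>B'\<in>Sub. card {\<sigma> \<in> P. \<sigma> ` A \<inter> B' = {}}) = (\<Sum>\<sigma>\<in>P. card {B' \<in> Sub. \<sigma> ` A \<inter> B' = {}})"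
    by (rule sum_multicount_gen[OF fS fP]) simp
  also have "\<dots> = (\<Sum>\<sigma>\<in>P. (m - s) choose s)" using eqB by simp
  also have "\<dots> = fact m * ((m - s) choose s)" using cP by simp
  finally have "(\<Sum>B'\<in>Sub. card (Nc m A B)) = fact m * ((m - s) choose s)"
    using eqN by simp
  then show ?thesis using cS by (simp add: mult.commute)
qed

lemma fact_ratio: "k \<le> n \<Longrightarrow> (fact n / fact (n - k) :: real) = (\<Prod>j<k. real n - real j)"
proof (induction k)
  case 0 then show ?case by simp
next
  case (Suc k)
  have "n - k = Suc (n - Suc k)" using Suc.prems by simp
  then have eq: "(fact (n - k) :: real) = real (n - k) * fact (n - Suc k)" by (metis fact_Suc of_nat_Suc)
  have nz: "real (n - k) \<noteq> 0" using Suc.prems by simp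
  have "(fact n / fact (n - Suc k) :: real) = fact n / fact (n - k) * real (n - k)"
    unfolding eq using nz by simp
  also have "\<dots> = (\<Prod>j<k. real n - real j) * (real n - real k)"
    using Suc by (simp add: of_nat_diff)
  finally show ?case by simp
qed

lemma binom_ratio:
  assumes "0 < m"
  shows "real ((m - s) choose s) \<le> real (m choose s) * ((real m - real s) / real m) ^ s"
proof (cases "2 * s \<le> m")
  case False
  then have h0: "(m - s) choose s = 0" by simp
  have "0 \<le> real (m choose s) * ((real m - real s) / real m) ^ s"
  proof (cases "s \<le> m")
    case True then show ?thesis using assms by (auto intro!: mult_nonneg_nonneg zero_le_power divide_nonneg_pos)
  next
    case False then show ?thesis by (simp add: binomial_eq_0)
  qed
  then show ?thesis by (simp only: h0 of_nat_0)
next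
  case True
  have h1: "fact s * real ((m - s) choose s) = (\<Prod>j<s. real (m - s) - real j)"
    using fact_binomial[of s "m - s", where 'a=real] fact_ratio[of s "m - s"] True by simp
  have h2: "fact s * real (m choose s) = (\<Prod>j<s. real m - real j)"
    using fact_binomial[of s m, where 'a=real] fact_ratio[of s m] True by simp
  have "(\<Prod>j<s. real (m - s) - real j) \<le> (\<Prod>j<s. (real m - real j) * ((real m - real s) / real m))"
  proof (rule prod_mono)
    fix j assume j: "j \<in> {..<s}"
    have "real m * (real m - real s - real j) \<le> (real m - real j) * (real m - real s)"
      using j by (simp add: algebra_simps)
    then have "real m - real s - real j \<le> (real m - real j) * ((real m - real s) / real m)"
      using assms by (simp add: field_simps)
    then show "0 \<le> real (m - s) - real j \<and> real (m - s) - real j \<le> (real m - real j) * ((real m - real s) / real m)"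
      using j True by (simp add: of_nat_diff)
  qed
  also have "\<dots> = (\<Prod>j<s. real m - real j) * ((real m - real s) / real m) ^ s"
    by (simp only: prod.distrib prod_constant card_lessThan)
  finally have "fact s * real ((m - s) choose s) \<le> fact s * (real (m choose s) * ((real m - real s) / real m) ^ s)"
    using h1 h2 by (metis mult.assoc)
  then show ?thesis by simp
qed

lemma Nc_bound:
  assumes "0 < m" "A \<subseteq> {..<m}" "card A = s" "B \<subseteq> {..<m}" "card B = s" "s \<le> m"
  shows "real (card (Nc m A B)) \<le> fact m * (1 - real s / real m) ^ s"
proof -
  have c: "real (card (Nc m A B)) * real (m choose s) = fact m * real ((m - s) choose s)"
    using Nc_count[OF assms(2-5)] by (metis of_nat_fact of_nat_mult)
  have pos: "real (m choose s) > 0" using assms by simp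
  have "real (card (Nc m A B)) * real (m choose s) \<le> fact m * (real (m choose s) * ((real m - real s) / real m) ^ s)"
    unfolding c by (rule mult_left_mono[OF binom_ratio[OF assms(1)]]) simp
  then have "real (card (Nc m A B)) \<le> fact m * ((real m - real s) / real m) ^ s"
    using pos by (simp add: mult.commute mult.left_commute)
  also have "(real m - real s) / real m = 1 - real s / real m" using assms by (simp add: field_simps)
  finally show ?thesis .
qed

lemma exists_tau:
  assumes m: "0 < m" and s: "1 \<le> s" "s \<le> m"
    and key: "real m ^ 2 * (1 - real s / real m) ^ d < 1"
  shows "\<exists>\<tau>. (\<forall>i<d. \<tau> i permutes {..<m}) \<and>
     (\<forall>A B. A \<subseteq> {..<m} \<and> card A = s \<and> B \<subseteq> {..<m} \<and> card B = s \<longrightarrow> (\<exists>i<d. \<tau> i ` A \<inter> B \<noteq> {}))"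
proof -
  define Sub where "Sub = {A. A \<subseteq> {..<m} \<and> card A = s}"
  define P where "P = {\<sigma>. \<sigma> permutes {..<m::nat}}"
  define T where "T = PiE {..<d} (\<lambda>_. P)"
  define Bad where "Bad = (\<Union>AB\<in>Sub \<times> Sub. PiE {..<d} (\<lambda>_. Nc m (fst AB) (snd AB)))"
  define q where "q = 1 - real s / real m"
  have q0: "0 \<le> q" using s m by (simp add: q_def field_simps)
  have fS: "finite Sub" unfolding Sub_def by (rule finite_subset[of _ "Pow {..<m}"]) auto
  have cS: "card Sub = m choose s" unfolding Sub_def using n_subsets[of "{..<m}" s] by simp
  have cP: "card P = fact m" unfolding P_def by (rule card_permutations) auto
  have cT: "card T = fact m ^ d" unfolding T_def by (simp add: card_PiE cP)
  have "card Bad \<le> (\<Sum>AB\<in>Sub \<times> Sub. card (PiE {..<d} (\<lambda>_. Nc m (fst AB) (snd AB))))"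
    unfolding Bad_def by (rule card_UN_le) (simp add: fS)
  also have "\<dots> = (\<Sum>AB\<in>Sub \<times> Sub. card (Nc m (fst AB) (snd AB)) ^ d)"
    by (simp add: card_PiE)
  finally have "real (card Bad) \<le> (\<Sum>AB\<in>Sub \<times> Sub. real (card (Nc m (fst AB) (snd AB))) ^ d)"
    by (metis (mono_tags, lifting) of_nat_le_iff of_nat_power of_nat_sum sum.cong)
  also have "\<dots> \<le> (\<Sum>AB\<in>Sub \<times> Sub. (fact m * q ^ s) ^ d)"
  proof (rule sum_mono)
    fix AB assume "AB \<in> Sub \<times> Sub"
    then have "fst AB \<subseteq> {..<m}" "card (fst AB) = s" "snd AB \<subseteq> {..<m}" "card (snd AB) = s"
      by (auto simp: Sub_def mem_Times_iff)
    then have "real (card (Nc m (fst AB) (snd AB))) \<le> fact m * q ^ s"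
      using Nc_bound[of m "fst AB" s "snd AB"] m s unfolding q_def by blast
    then show "real (card (Nc m (fst AB) (snd AB))) ^ d \<le> (fact m * q ^ s) ^ d"
      by (rule power_mono) simp
  qed
  also have "\<dots> = real (m choose s) ^ 2 * (fact m) ^ d * (q ^ d) ^ s"
    by (simp add: cS card_cartesian_product power2_eq_square power_mult_distrib power_mult[symmetric] mult.commute)
  also have "\<dots> \<le> (real m ^ s) ^ 2 * (fact m) ^ d * (q ^ d) ^ s"
    using binomial_le_pow[OF s(2)] q0
    by (intro mult_right_mono power_mono) (auto simp del: of_nat_power simp: of_nat_power[symmetric])
  also have "\<dots> = (real m ^ 2 * q ^ d) ^ s * (fact m) ^ d"
    by (simp add: power_mult_distrib power_mult[symmetric] mult.commute mult.left_commute)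
  also have "\<dots> < 1 * (fact m) ^ d"
  proof (rule mult_strict_right_mono)
    show "(real m ^ 2 * q ^ d) ^ s < 1"
      using key q0 s unfolding q_def[symmetric] by (subst power_less_one_iff) auto
  qed simp
  finally have "real (card Bad) < real (card T)" using cT by (simp add: of_nat_fact)
  then have "card Bad < card T" by (simp only: of_nat_less_iff)
  have fB: "finite Bad" unfolding Bad_def
    by (intro finite_UN_I) (auto simp: fS intro!: finite_PiE Nc_finite)
  have "\<not> T \<subseteq> Bad"
  proof
    assume "T \<subseteq> Bad"
    then have "card T \<le> card Bad" by (rule card_mono[OF fB])
    then show False using \<open>card Bad < card T\<close> by simp
  qed
  then obtain \<tau> where t: "\<tau> \<in> T" "\<tau> \<notin> Bad" by blast
  have tp: "\<tau> i \<in> P" if "i < d" for i using t(1) that by (auto simp: T_def)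
  have te: "\<tau> \<in> extensional {..<d}" using t(1) by (simp add: T_def PiE_iff)
  show ?thesis
  proof (rule exI[of _ \<tau>], intro conjI allI impI)
    show "\<tau> i permutes {..<m}" if "i < d" for i using tp[OF that] by (simp add: P_def)
    fix A B assume AB: "A \<subseteq> {..<m} \<and> card A = s \<and> B \<subseteq> {..<m} \<and> card B = s"
    then have ABS: "(A, B) \<in> Sub \<times> Sub" by (simp add: Sub_def)
    have "\<tau> \<in> Bad" if "\<tau> \<in> PiE {..<d} (\<lambda>_. Nc m A B)"
      unfolding Bad_def by (rule UN_I[OF ABS]) (simp add: that)
    then have "\<tau> \<notin> PiE {..<d} (\<lambda>_. Nc m A B)" using t(2) by blast
    then obtain i where i: "i < d" "\<tau> i \<notin> Nc m A B" using te
      by (auto simp: PiE_iff)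
    then have "\<tau> i ` A \<inter> B \<noteq> {}" using tp[OF i(1)] unfolding P_def Nc_def by auto
    then show "\<exists>i<d. \<tau> i ` A \<inter> B \<noteq> {}" using i(1) by blast
  qed
qed

definition good_graph :: "nat \<Rightarrow> (nat \<Rightarrow> nat \<Rightarrow> bool) \<Rightarrow> bool" where
  "good_graph m adj \<longleftrightarrow> (\<forall>x y. adj x y \<longrightarrow> x < m \<and> y < m \<and> x \<noteq> y) \<and>
     (\<forall>x y. adj x y \<longrightarrow> adj y x) \<and> (\<forall>x<m. \<exists>y. adj x y)"

lemma graph_exists:
  assumes m: "2 \<le> m" and s: "1 \<le> s" "s \<le> m"
    and key: "real m ^ 2 * (1 - real s / real m) ^ d < 1"
  shows "\<exists>adj. good_graph m adj \<and> (\<forall>x. card {y. adj x y} \<le> 2 * d + 2) \<and>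
     (\<forall>A B. A \<subseteq> {..<m} \<and> B \<subseteq> {..<m} \<and> A \<inter> B = {} \<and> s \<le> card A \<and> s \<le> card B
        \<longrightarrow> (\<exists>a\<in>A. \<exists>b\<in>B. adj a b))"
proof -
  obtain \<tau> where tp: "\<And>i. i < d \<Longrightarrow> \<tau> i permutes {..<m}"
    and th: "\<And>A B. A \<subseteq> {..<m} \<Longrightarrow> card A = s \<Longrightarrow> B \<subseteq> {..<m} \<Longrightarrow> card B = s \<Longrightarrow> \<exists>i<d. \<tau> i ` A \<inter> B \<noteq> {}"
    using exists_tau[OF _ s key] m by fastforce
  define adj where "adj x y \<longleftrightarrow> x < m \<and> y < m \<and> x \<noteq> y \<and>
     ((\<exists>i<d. \<tau> i x = y \<or> \<tau> i y = x) \<or> y = Suc x \<or> x = Suc y)" for x y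
  have g1: "\<forall>x y. adj x y \<longrightarrow> x < m \<and> y < m \<and> x \<noteq> y" by (simp add: adj_def)
  have g2: "\<forall>x y. adj x y \<longrightarrow> adj y x" by (auto simp: adj_def)
  have g3: "\<exists>y. adj x y" if x: "x < m" for x
    proof (cases "Suc x < m")
      case True then have "adj x (Suc x)" using x by (simp add: adj_def)
      then show ?thesis by blast
    next
      case False then have "x = Suc (x - 1)" "x - 1 < m" using x m by auto
      then have "adj x (x - 1)" using x by (auto simp: adj_def)
      then show ?thesis by blast
    qed
  have g: "good_graph m adj" unfolding good_graph_def using g1 g2 g3 by blast
  have deg: "card {y. adj x y} \<le> 2 * d + 2" for x
  proof -
    have sub: "{y. adj x y} \<subseteq> ((\<lambda>i. \<tau> i x) ` {..<d} \<union> (\<lambda>i. inv (\<tau> i) x) ` {..<d}) \<union> {Suc x, x - 1}"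
    proof
      fix y assume "y \<in> {y. adj x y}"
      then have a: "(\<exists>i<d. \<tau> i x = y \<or> \<tau> i y = x) \<or> y = Suc x \<or> x = Suc y" by (simp add: adj_def)
      show "y \<in> ((\<lambda>i. \<tau> i x) ` {..<d} \<union> (\<lambda>i. inv (\<tau> i) x) ` {..<d}) \<union> {Suc x, x - 1}"
      proof (cases "\<exists>i<d. \<tau> i x = y \<or> \<tau> i y = x")
        case True
        then obtain i where i: "i < d" "\<tau> i x = y \<or> \<tau> i y = x" by blast
        show ?thesis
        proof (cases "\<tau> i x = y")
          case True then show ?thesis using i by blast
        next
          case False then have "\<tau> i y = x" using i by blast
          then have "inv (\<tau> i) x = y" using permutes_inv_eq[OF tp[OF i(1)]] by blast
          then show ?thesis using i by blast
        qed
      next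
        case False then show ?thesis using a by auto
      qed
    qed
    have "card {y. adj x y} \<le> card (((\<lambda>i. \<tau> i x) ` {..<d} \<union> (\<lambda>i. inv (\<tau> i) x) ` {..<d}) \<union> {Suc x, x - 1})"
      by (rule card_mono[OF _ sub]) simp
    also have "\<dots> \<le> card ((\<lambda>i. \<tau> i x) ` {..<d} \<union> (\<lambda>i. inv (\<tau> i) x) ` {..<d}) + card {Suc x, x - 1}"
      by (rule card_Un_le)
    also have "\<dots> \<le> (card ((\<lambda>i. \<tau> i x) ` {..<d}) + card ((\<lambda>i. inv (\<tau> i) x) ` {..<d})) + 2"
      by (intro add_mono card_Un_le) (simp add: card_insert_le_m1)
    also have "\<dots> \<le> (d + d) + 2"
      by (intro add_mono card_image_le[of "{..<d}", simplified]) auto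
    finally show ?thesis by simp
  qed
  have hole: "\<exists>a\<in>A. \<exists>b\<in>B. adj a b"
    if AB: "A \<subseteq> {..<m}" "B \<subseteq> {..<m}" "A \<inter> B = {}" "s \<le> card A" "s \<le> card B" for A B
  proof -
    obtain A0 where A0: "A0 \<subseteq> A" "card A0 = s" using obtain_subset_with_card_n[OF AB(4)] by blast
    obtain B0 where B0: "B0 \<subseteq> B" "card B0 = s" using obtain_subset_with_card_n[OF AB(5)] by blast
    obtain i where i: "i < d" "\<tau> i ` A0 \<inter> B0 \<noteq> {}"
      using th[of A0 B0] A0 B0 AB by blast
    then obtain a where a: "a \<in> A0" "\<tau> i a \<in> B0" by blast
    have "a \<in> A" "\<tau> i a \<in> B" using a A0 B0 by auto
    moreover have "a < m" "\<tau> i a < m" "a \<noteq> \<tau> i a"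
      using \<open>a \<in> A\<close> \<open>\<tau> i a \<in> B\<close> AB(1,2,3) by auto
    then have "adj a (\<tau> i a)" unfolding adj_def using i(1) by blast
    ultimately show ?thesis by blast
  qed
  show ?thesis using g deg hole by blast
qed



definition rtF :: "nat \<Rightarrow> nat" where "rtF i = 3 * i"
definition midF :: "nat \<Rightarrow> nat \<Rightarrow> nat" where "midF i j = 3 * prod_encode (i, j) + 1"
definition lfF :: "nat \<Rightarrow> nat \<Rightarrow> nat" where "lfF i j = 3 * prod_encode (min i j, max i j) + 2"

lemma rtF_eq[simp]: "rtF i = rtF j \<longleftrightarrow> i = j" by (simp add: rtF_def)
lemma midF_eq[simp]: "midF i j = midF k l \<longleftrightarrow> i = k \<and> j = l" by (simp add: midF_def prod_encode_eq)
lemma lfF_eq: "lfF i j = lfF k l \<longleftrightarrow> min i j = min k l \<and> max i j = max k l" by (simp add: lfF_def prod_encode_eq)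
lemma rt_mid[simp]: "rtF i \<noteq> midF k l" "midF k l \<noteq> rtF i" unfolding rtF_def midF_def by presburger+
lemma rt_lf[simp]: "rtF i \<noteq> lfF k l" "lfF k l \<noteq> rtF i" unfolding rtF_def lfF_def by presburger+
lemma mid_lf[simp]: "midF i j \<noteq> lfF k l" "lfF k l \<noteq> midF i j" unfolding midF_def lfF_def by presburger+
lemma lfF_same: "lfF i j = lfF i l \<longleftrightarrow> j = l"
  unfolding lfF_eq by (auto simp: min_def max_def split: if_splits)
lemma lfF_diff: "i \<noteq> k \<Longrightarrow> lfF i j = lfF k l \<longleftrightarrow> j = k \<and> l = i"
  unfolding lfF_eq by (auto simp: min_def max_def split: if_splits)
lemma lfF_sym: "lfF i j = lfF j i" by (simp add: lfF_def min.commute max.commute)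

definition VsF :: "(nat \<Rightarrow> nat \<Rightarrow> bool) \<Rightarrow> nat \<Rightarrow> nat set" where
  "VsF adj i = insert (rtF i) (midF i ` {j. adj i j} \<union> lfF i ` {j. adj i j})"
definition EsF :: "(nat \<Rightarrow> nat \<Rightarrow> bool) \<Rightarrow> nat \<Rightarrow> (nat \<times> nat) set" where
  "EsF adj i = (\<lambda>j. (rtF i, midF i j)) ` {j. adj i j} \<union> (\<lambda>j. (midF i j, lfF i j)) ` {j. adj i j}"

lemma EsF_mem: "(a, b) \<in> EsF adj i \<longleftrightarrow> (\<exists>j. adj i j \<and> ((a = rtF i \<and> b = midF i j) \<or> (a = midF i j \<and> b = lfF i j)))"
  by (auto simp: EsF_def)

lemma VsF_mem: "v \<in> VsF adj i \<longleftrightarrow> v = rtF i \<or> (\<exists>j. adj i j \<and> (v = midF i j \<or> v = lfF i j))"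
  by (auto simp: VsF_def)

lemma children_rt: "children (EsF adj i) (rtF i) = midF i ` {j. adj i j}"
  by (auto simp: children_def EsF_mem)
lemma children_mid: "adj i j \<Longrightarrow> children (EsF adj i) (midF i j) = {lfF i j}"
  by (auto simp: children_def EsF_mem)
lemma children_lf: "children (EsF adj i) (lfF i j) = {}"
  by (auto simp: children_def EsF_mem)

lemma leaves_F:
  assumes "\<exists>j. adj i j"
  shows "tree_leaves (VsF adj i) (EsF adj i) = lfF i ` {j. adj i j}"
proof -
  have "v \<in> tree_leaves (VsF adj i) (EsF adj i) \<longleftrightarrow> v \<in> lfF i ` {j. adj i j}" for v
  proof
    assume v: "v \<in> tree_leaves (VsF adj i) (EsF adj i)"
    then have vV: "v \<in> VsF adj i" and c: "children (EsF adj i) v = {}" by (auto simp: tree_leaves_def)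
    have "v \<noteq> rtF i" using c assms children_rt[of adj i] by auto
    moreover have "v \<noteq> midF i j" if "adj i j" for j using c children_mid[of adj i j] that by auto
    ultimately show "v \<in> lfF i ` {j. adj i j}" using vV by (auto simp: VsF_mem)
  next
    assume "v \<in> lfF i ` {j. adj i j}"
    then show "v \<in> tree_leaves (VsF adj i) (EsF adj i)"
      by (auto simp: tree_leaves_def VsF_mem children_lf)
  qed
  then show ?thesis by blast
qed

lemma finite_nbrs: "good_graph m adj \<Longrightarrow> finite {j. adj i j}"
  by (rule finite_subset[of _ "{..<m}"]) (auto simp: good_graph_def)

lemma rooted_F:
  assumes G: "good_graph m adj"
  shows "rooted_tree (VsF adj i) (EsF adj i) (rtF i)"
  unfolding rooted_tree_def
proof (intro conjI)
  show "finite (VsF adj i)" using finite_nbrs[OF G] by (simp add: VsF_def)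
  show "rtF i \<in> VsF adj i" by (simp add: VsF_def)
  show "EsF adj i \<subseteq> VsF adj i \<times> VsF adj i" by (auto simp: EsF_def VsF_def)
  show "\<forall>u. (u, rtF i) \<notin> EsF adj i" by (simp add: EsF_mem)
  show "\<forall>v\<in>VsF adj i - {rtF i}. \<exists>!u. (u, v) \<in> EsF adj i"
  proof
    fix v assume "v \<in> VsF adj i - {rtF i}"
    then obtain j where j: "adj i j" "v = midF i j \<or> v = lfF i j" by (auto simp: VsF_mem)
    show "\<exists>!u. (u, v) \<in> EsF adj i"
    proof (cases "v = midF i j")
      case True
      show ?thesis
      proof (rule ex1I[of _ "rtF i"])
        show "(rtF i, v) \<in> EsF adj i" using True j by (auto simp: EsF_mem)
        fix u assume "(u, v) \<in> EsF adj i" then show "u = rtF i" using True by (auto simp: EsF_mem)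
      qed
    next
      case False
      then have v: "v = lfF i j" using j by blast
      show ?thesis
      proof (rule ex1I[of _ "midF i j"])
        show "(midF i j, v) \<in> EsF adj i" using v j by (auto simp: EsF_mem)
        fix u assume "(u, v) \<in> EsF adj i" then show "u = midF i j" using v by (auto simp: EsF_mem lfF_same)
      qed
    qed
  qed
  show "\<forall>v\<in>VsF adj i. (rtF i, v) \<in> (EsF adj i)\<^sup>*"
  proof
    fix v assume "v \<in> VsF adj i"
    then have "v = rtF i \<or> (\<exists>j. adj i j \<and> (v = midF i j \<or> v = lfF i j))" by (simp add: VsF_mem)
    then show "(rtF i, v) \<in> (EsF adj i)\<^sup>*"
    proof (elim disjE exE conjE)
      fix j assume j: "adj i j" "v = midF i j"
      have e1: "(rtF i, midF i j) \<in> EsF adj i" using j by (auto simp: EsF_mem)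
      then show ?thesis using j(2) by (simp add: r_into_rtrancl)
    next
      fix j assume j: "adj i j" "v = lfF i j"
      have e1: "(rtF i, midF i j) \<in> EsF adj i" using j by (auto simp: EsF_mem)
      have e2: "(midF i j, lfF i j) \<in> EsF adj i" using j by (auto simp: EsF_mem)
      show ?thesis using j(2) e1 e2 by (meson r_into_rtrancl rtrancl_into_rtrancl)
    qed simp
  qed
qed

lemma extended_F:
  assumes G: "good_graph m adj" and i: "i < m"
  shows "extended_tree (VsF adj i) (EsF adj i) (rtF i)"
proof -
  have ex: "\<exists>j. adj i j" using G i by (simp add: good_graph_def)
  show ?thesis unfolding extended_tree_def
  proof (intro conjI ballI allI impI)
    show "rooted_tree (VsF adj i) (EsF adj i) (rtF i)" by (rule rooted_F[OF G])
    fix w u assume w: "w \<in> tree_leaves (VsF adj i) (EsF adj i)" and e: "(u, w) \<in> EsF adj i"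
    obtain j where j: "adj i j" "w = lfF i j" using w leaves_F[of adj i, OF ex] by auto
    then have "u = midF i j" using e by (auto simp: EsF_mem lfF_same)
    then show "children (EsF adj i) u = {w}" using children_mid[of adj i j] j by simp
  qed
qed

lemma height_F:
  assumes G: "good_graph m adj" and i: "i < m"
  shows "tree_height (VsF adj i) (EsF adj i) (rtF i) = 3"
proof -
  have ex: "\<exists>j. adj i j" using G i by (simp add: good_graph_def)
  then obtain j0 where j0: "adj i j0" by blast
  let ?E = "EsF adj i" and ?L = "tree_leaves (VsF adj i) (EsF adj i)"
  define S where "S = {length xs | xs. xs \<noteq> [] \<and> hd xs = rtF i \<and> last xs \<in> ?L \<and> successively (\<lambda>a b. (a, b) \<in> ?E) xs}"
  have L: "?L = lfF i ` {j. adj i j}" by (rule leaves_F[of adj i, OF ex])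
  have "length xs = 3" if xs: "xs \<noteq> []" "hd xs = rtF i" "last xs \<in> ?L" "successively (\<lambda>a b. (a, b) \<in> ?E) xs" for xs
  proof -
    obtain ys where ys: "xs = rtF i # ys" using xs(1,2) by (cases xs) auto
    show ?thesis
    proof (cases ys)
      case Nil then show ?thesis using xs(3) ys L by auto
    next
      case (Cons y zs)
      then have "(rtF i, y) \<in> ?E" using xs(4) ys by simp
      then obtain j where j: "adj i j" "y = midF i j" by (auto simp: EsF_mem)
      show ?thesis
      proof (cases zs)
        case Nil then show ?thesis using xs(3) ys Cons L j by auto
      next
        case (Cons z ws)
        then have "(y, z) \<in> ?E" using xs(4) ys \<open>ys = y # zs\<close> by simp
        then have z: "z = lfF i j" using j by (auto simp: EsF_mem)
        show ?thesis
        proof (cases ws)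
          case Nil then show ?thesis using ys \<open>ys = y # zs\<close> Cons by simp
        next
          case (Cons w us)
          then have "(z, w) \<in> ?E" using xs(4) ys \<open>ys = y # zs\<close> \<open>zs = z # ws\<close> by simp
          then show ?thesis using z by (auto simp: EsF_mem)
        qed
      qed
    qed
  qed
  then have "S \<subseteq> {3}" unfolding S_def by blast
  moreover have "3 \<in> S"
  proof -
    have "[rtF i, midF i j0, lfF i j0] \<noteq> [] \<and> hd [rtF i, midF i j0, lfF i j0] = rtF i \<and>
      last [rtF i, midF i j0, lfF i j0] \<in> ?L \<and> successively (\<lambda>a b. (a, b) \<in> ?E) [rtF i, midF i j0, lfF i j0]"
      using j0 L by (auto simp: EsF_mem)
    then show ?thesis unfolding S_def by (metis (mono_tags, lifting) mem_Collect_eq length_Cons list.size(3) numeral_3_eq_3)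
  qed
  ultimately have "S = {3}" by blast
  then show ?thesis unfolding tree_height_def S_def[symmetric] by simp
qed

lemma leaves_G:
  assumes G: "good_graph m adj" and i: "i < m"
  shows "tree_leaves (VsF adj i) (EsF adj i) = lfF i ` {j. adj i j}"
  using G i by (intro leaves_F) (simp add: good_graph_def)

lemma common_vertex:
  assumes G: "good_graph m adj" and ij: "i \<noteq> j" and v: "v \<in> VsF adj i" "v \<in> VsF adj j"
  shows "v = lfF i j \<and> adj i j"
proof -
  from v(1) consider "v = rtF i" | a where "adj i a" "v = midF i a" | a where "adj i a" "v = lfF i a"
    by (auto simp: VsF_mem)
  then show ?thesis
  proof cases
    case 1 then show ?thesis using v(2) ij by (auto simp: VsF_mem)
  next
    case 2 then show ?thesis using v(2) ij by (auto simp: VsF_mem)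
  next
    case (3 a)
    then obtain b where b: "adj j b" "lfF i a = lfF j b" using v(2) by (auto simp: VsF_mem)
    then have "a = j" using lfF_diff[OF ij] by blast
    then show ?thesis using 3 by simp
  qed
qed

lemma adjacent_F:
  assumes G: "good_graph m adj" and i: "i < m" and j: "j < m"
  shows "adjacent_trees (VsF adj) (EsF adj) i j \<longleftrightarrow> adj i j"
proof
  assume a: "adjacent_trees (VsF adj) (EsF adj) i j"
  then have ij: "i \<noteq> j" by (simp add: adjacent_trees_def)
  obtain v where "v \<in> tree_leaves (VsF adj i) (EsF adj i)" "v \<in> tree_leaves (VsF adj j) (EsF adj j)"
    using a by (auto simp: adjacent_trees_def)
  then have "v \<in> VsF adj i" "v \<in> VsF adj j" by (auto simp: tree_leaves_def)
  then show "adj i j" using common_vertex[OF G ij] by blast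
next
  assume a: "adj i j"
  then have ij: "i \<noteq> j" and ji: "adj j i" using G by (auto simp: good_graph_def)
  have "lfF i j \<in> tree_leaves (VsF adj i) (EsF adj i)" using leaves_G[OF G i] a by auto
  moreover have "lfF i j \<in> tree_leaves (VsF adj j) (EsF adj j)" using leaves_G[OF G j] ji lfF_sym[of i j] by auto
  ultimately show "adjacent_trees (VsF adj) (EsF adj) i j" using ij by (auto simp: adjacent_trees_def)
qed

lemma btb_F:
  assumes G: "good_graph m adj"
  shows "binary_tree_based m (VsF adj) (EsF adj) rtF"
  unfolding binary_tree_based_def
proof (intro conjI)
  show "inj_on rtF {..<m}" by (simp add: inj_on_def)
  show "\<forall>i<m. extended_tree (VsF adj i) (EsF adj i) (rtF i)" using extended_F[OF G] by blast
  show "\<forall>i<m. \<forall>j<m. i \<noteq> j \<longrightarrow> (\<forall>a b. (a, b) \<in> EsF adj i \<longrightarrow> (a, b) \<notin> EsF adj j \<and> (b, a) \<notin> EsF adj j)"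
    by (auto simp: EsF_mem)
  show "\<forall>i<m. \<forall>v\<in>tree_leaves (VsF adj i) (EsF adj i). card {j. j < m \<and> v \<in> tree_leaves (VsF adj j) (EsF adj j)} = 2"
  proof (intro allI impI ballI)
    fix i v assume i: "i < m" and v: "v \<in> tree_leaves (VsF adj i) (EsF adj i)"
    then obtain j where j: "adj i j" "v = lfF i j" using leaves_G[OF G i] by auto
    then have jm: "j < m" and ij: "i \<noteq> j" and ji: "adj j i" using G by (auto simp: good_graph_def)
    have "{k. k < m \<and> v \<in> tree_leaves (VsF adj k) (EsF adj k)} = {i, j}"
    proof
      show "{k. k < m \<and> v \<in> tree_leaves (VsF adj k) (EsF adj k)} \<subseteq> {i, j}"
      proof
        fix k assume k: "k \<in> {k. k < m \<and> v \<in> tree_leaves (VsF adj k) (EsF adj k)}"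
        then obtain l where l: "adj k l" "lfF k l = lfF i j" using leaves_G[OF G] j(2) by force
        show "k \<in> {i, j}"
        proof (cases "k = i")
          case False then show ?thesis using lfF_diff[OF False] l by auto
        qed simp
      qed
      show "{i, j} \<subseteq> {k. k < m \<and> v \<in> tree_leaves (VsF adj k) (EsF adj k)}"
        using i jm v j ji leaves_G[OF G jm] lfF_sym[of i j] by auto
    qed
    then show "card {k. k < m \<and> v \<in> tree_leaves (VsF adj k) (EsF adj k)} = 2" using ij by simp
  qed
  show "\<forall>i<m. \<forall>j<m. i \<noteq> j \<longrightarrow>
        (\<forall>v w. v \<in> VsF adj i \<inter> VsF adj j \<and> w \<in> VsF adj i \<inter> VsF adj j \<longrightarrow> v = w) \<and>
        (\<forall>v \<in> VsF adj i \<inter> VsF adj j. v \<in> tree_leaves (VsF adj i) (EsF adj i) \<and> v \<in> tree_leaves (VsF adj j) (EsF adj j))"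
  proof (intro allI impI conjI ballI)
    fix i j v w assume i: "i < m" and j: "j < m" and ij: "i \<noteq> j"
    {
      assume "v \<in> VsF adj i \<inter> VsF adj j \<and> w \<in> VsF adj i \<inter> VsF adj j"
      then show "v = w" using common_vertex[OF G ij] by blast
    }
    {
      assume "v \<in> VsF adj i \<inter> VsF adj j"
      then have v: "v = lfF i j" "adj i j" using common_vertex[OF G ij] by auto
      then have ji: "adj j i" using G by (auto simp: good_graph_def)
      show "v \<in> tree_leaves (VsF adj i) (EsF adj i)" using leaves_G[OF G i] v by auto
      show "v \<in> tree_leaves (VsF adj j) (EsF adj j)" using leaves_G[OF G j] v ji lfF_sym[of i j] by auto
    }
  qed
qed

lemma pseudoedge_F:
  assumes G: "good_graph m adj"
  shows "pseudoedge m (VsF adj) (EsF adj) rtF e \<longleftrightarrow> (\<exists>i<m. \<exists>j<m. adj i j \<and> e = {rtF i, rtF j})"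
  unfolding pseudoedge_def using adjacent_F[OF G] by blast

lemma pdeg_F:
  assumes G: "good_graph m adj" and i: "i < m"
  shows "pseudodegree m (VsF adj) (EsF adj) rtF (rtF i) \<le> card {j. adj i j}"
proof -
  have sub: "{e. pseudoedge m (VsF adj) (EsF adj) rtF e \<and> rtF i \<in> e} \<subseteq> (\<lambda>j. {rtF i, rtF j}) ` {j. adj i j}"
  proof
    fix e assume "e \<in> {e. pseudoedge m (VsF adj) (EsF adj) rtF e \<and> rtF i \<in> e}"
    then obtain a b where ab: "adj a b" "e = {rtF a, rtF b}" "rtF i \<in> e" using pseudoedge_F[OF G] by auto
    then have "i = a \<or> i = b" by auto
    then show "e \<in> (\<lambda>j. {rtF i, rtF j}) ` {j. adj i j}"
    proof
      assume "i = a" then show ?thesis using ab by auto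
    next
      assume ib: "i = b"
      have "\<forall>x y. adj x y \<longrightarrow> adj y x" using G by (simp add: good_graph_def)
      then have "adj i a" "e = {rtF i, rtF a}" using ab ib by auto
      then show ?thesis by auto
    qed
  qed
  have "pseudodegree m (VsF adj) (EsF adj) rtF (rtF i) \<le> card ((\<lambda>j. {rtF i, rtF j}) ` {j. adj i j})"
    unfolding pseudodegree_def by (rule card_mono[OF finite_imageI[OF finite_nbrs[OF G]] sub])
  also have "\<dots> \<le> card {j. adj i j}" by (rule card_image_le[OF finite_nbrs[OF G]])
  finally show ?thesis .
qed

lemma greedy_matching:
  fixes P :: "'a set \<Rightarrow> bool" and k :: real
  assumes fin: "finite U" "finite W" and disj: "U \<inter> W = {}" and cU: "k \<le> card U" and cW: "k \<le> card W"
    and hole: "\<And>A B. A \<subseteq> U \<Longrightarrow> B \<subseteq> W \<Longrightarrow> real (card A) > 2 * k / 3 \<Longrightarrow> real (card B) > 2 * k / 3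
       \<Longrightarrow> \<exists>a\<in>A. \<exists>b\<in>B. P {a, b}"
  shows "\<exists>M. (\<forall>e\<in>M. P e) \<and> (\<forall>e\<in>M. \<forall>f\<in>M. e \<noteq> f \<longrightarrow> e \<inter> f = {}) \<and>
     (\<forall>e\<in>M. \<exists>u\<in>U. \<exists>w\<in>W. e = {u, w}) \<and> real (card M) \<ge> k / 3"
proof -
  define good where "good M \<longleftrightarrow> finite M \<and> (\<forall>e\<in>M. P e) \<and> (\<forall>e\<in>M. \<forall>f\<in>M. e \<noteq> f \<longrightarrow> e \<inter> f = {}) \<and>
     (\<forall>e\<in>M. \<exists>u\<in>U. \<exists>w\<in>W. e = {u, w})" for M
  define n0 where "n0 = nat \<lceil>k / 3\<rceil>"
  have step: "\<forall>n \<le> n0. \<exists>M. good M \<and> card M = n"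
  proof (intro allI)
    fix n show "n \<le> n0 \<longrightarrow> (\<exists>M. good M \<and> card M = n)"
    proof (induction n)
      case 0
      have "good {}" by (simp add: good_def)
      then show ?case by (intro impI exI[of _ "{}"]) simp
    next
      case (Suc n)
      show ?case
      proof
        assume sn: "Suc n \<le> n0"
        then obtain M where M: "good M" "card M = n" using Suc.IH by auto
        have "n < n0" using sn by simp
        then have "int n < \<lceil>k / 3\<rceil>" unfolding n0_def by linarith
        then have nk: "real n < k / 3" by (simp add: less_ceiling_iff)
        define C where "C = \<Union>M"
        have cUC: "card (U \<inter> C) \<le> n"
        proof -
          have "U \<inter> C = (\<Union>e\<in>M. U \<inter> e)" by (auto simp: C_def)
          then have "card (U \<inter> C) \<le> (\<Sum>e\<in>M. card (U \<inter> e))" using card_UN_le[of M "\<lambda>e. U \<inter> e"] M(1)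
            by (simp add: good_def)
          also have "\<dots> \<le> (\<Sum>e\<in>M. 1)"
          proof (rule sum_mono)
            fix e assume "e \<in> M"
            then obtain u w where e: "u \<in> U" "w \<in> W" "e = {u, w}" using M(1) by (auto simp: good_def)
            then have "U \<inter> e \<subseteq> {u}" using disj by auto
            then show "card (U \<inter> e) \<le> 1" using card_mono[of "{u}" "U \<inter> e"] by simp
          qed
          finally show ?thesis using M(2) by simp
        qed
        have cWC: "card (W \<inter> C) \<le> n"
        proof -
          have "W \<inter> C = (\<Union>e\<in>M. W \<inter> e)" by (auto simp: C_def)
          then have "card (W \<inter> C) \<le> (\<Sum>e\<in>M. card (W \<inter> e))" using card_UN_le[of M "\<lambda>e. W \<inter> e"] M(1)
            by (simp add: good_def)
          also have "\<dots> \<le> (\<Sum>e\<in>M. 1)"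
          proof (rule sum_mono)
            fix e assume "e \<in> M"
            then obtain u w where e: "u \<in> U" "w \<in> W" "e = {u, w}" using M(1) by (auto simp: good_def)
            then have "W \<inter> e \<subseteq> {w}" using disj by auto
            then show "card (W \<inter> e) \<le> 1" using card_mono[of "{w}" "W \<inter> e"] by simp
          qed
          finally show ?thesis using M(2) by simp
        qed
        have "card (U - C) = card U - card (U \<inter> C)" using fin(1) by (simp add: card_Diff_subset_Int)
        moreover have "card (U \<inter> C) \<le> card U" using fin(1) by (simp add: card_mono)
        ultimately have "real (card (U - C)) = real (card U) - real (card (U \<inter> C))" by simp
        then have hU: "real (card (U - C)) > 2 * k / 3" using cUC cU nk by linarith
        have "card (W - C) = card W - card (W \<inter> C)" using fin(2) by (simp add: card_Diff_subset_Int)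
        moreover have "card (W \<inter> C) \<le> card W" using fin(2) by (simp add: card_mono)
        ultimately have "real (card (W - C)) = real (card W) - real (card (W \<inter> C))" by simp
        then have hW: "real (card (W - C)) > 2 * k / 3" using cWC cW nk by linarith
        obtain a b where ab: "a \<in> U - C" "b \<in> W - C" "P {a, b}"
          using hole[of "U - C" "W - C"] hU hW by blast
        have notin: "{a, b} \<notin> M" using ab(1) by (auto simp: C_def)
        have "good (insert {a, b} M)" unfolding good_def
        proof (intro conjI ballI impI)
          show "finite (insert {a, b} M)" using M(1) by (simp add: good_def)
          fix e assume e: "e \<in> insert {a, b} M"
          show "P e" using e ab M(1) by (auto simp: good_def)
          show "\<exists>u\<in>U. \<exists>w\<in>W. e = {u, w}" using e ab M(1) by (auto simp: good_def)
          fix f assume f: "f \<in> insert {a, b} M" and ef: "e \<noteq> f"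
          have abC: "a \<notin> C" "b \<notin> C" using ab by auto
          show "e \<inter> f = {}"
          proof (cases "e = {a, b}")
            case True
            then have "f \<in> M" using f ef by auto
            then have "f \<subseteq> C" by (auto simp: C_def)
            then show ?thesis using True abC by auto
          next
            case False
            then have eM: "e \<in> M" using e by auto
            show ?thesis
            proof (cases "f = {a, b}")
              case True
              have "e \<subseteq> C" using eM by (auto simp: C_def)
              then show ?thesis using True abC by auto
            next
              case False
              then have "f \<in> M" using f by auto
              then show ?thesis using eM ef M(1) by (simp add: good_def)
            qed
          qed
        qed
        moreover have "card (insert {a, b} M) = Suc n" using M notin by (simp add: good_def)
        ultimately show "\<exists>M. good M \<and> card M = Suc n" by blast
      qed
    qed
  qed
  then obtain M where M: "good M" "card M = n0" by blast
  have "real n0 \<ge> k / 3" unfolding n0_def by linarith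
  then show ?thesis using M by (auto simp: good_def)
qed

lemma construction:
  assumes G: "good_graph m adj" and m1: "1 \<le> m"
    and deg: "\<forall>x. real (card {y. adj x y}) \<le> D"
    and hole: "\<forall>A B. A \<subseteq> {..<m} \<and> B \<subseteq> {..<m} \<and> A \<inter> B = {} \<and>
       real (card A) > 2 * (real m powr 0.999) / 3 \<and> real (card B) > 2 * (real m powr 0.999) / 3
       \<longrightarrow> (\<exists>a\<in>A. \<exists>b\<in>B. adj a b)"
  shows "pseudoexpander m (VsF adj) (EsF adj) rtF \<and>
    (\<forall>t \<in> roots m rtF. real (pseudodegree m (VsF adj) (EsF adj) rtF t) \<le> D)"
proof -
  have btb: "binary_tree_based m (VsF adj) (EsF adj) rtF" by (rule btb_F[OF G])
  have ht: "\<forall>i<m. real (tree_height (VsF adj i) (EsF adj i) (rtF i)) \<le> log 2 (real m) / 4.9 + 3"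
  proof (intro allI impI)
    fix i assume "i < m"
    then have "tree_height (VsF adj i) (EsF adj i) (rtF i) = 3" by (rule height_F[OF G])
    moreover have "log 2 (real m) \<ge> 0" using m1 by simp
    ultimately show "real (tree_height (VsF adj i) (EsF adj i) (rtF i)) \<le> log 2 (real m) / 4.9 + 3" by simp
  qed
  define k where "k = real m powr 0.999"
  have mt: "\<exists>M. pseudomatching_between m (VsF adj) (EsF adj) rtF U W M \<and> real (card M) \<ge> real m powr 0.999 / 3"
    if UW: "U \<subseteq> roots m rtF" "W \<subseteq> roots m rtF" "U \<inter> W = {}"
       "real (card U) \<ge> real m powr 0.999" "real (card W) \<ge> real m powr 0.999" for U W
  proof -
    have fin: "finite U" "finite W" using UW finite_subset unfolding roots_def by blast+
    have hl: "\<exists>a\<in>A. \<exists>b\<in>B. pseudoedge m (VsF adj) (EsF adj) rtF {a, b}"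
      if AB: "A \<subseteq> U" "B \<subseteq> W" "real (card A) > 2 * k / 3" "real (card B) > 2 * k / 3" for A B
    proof -
      define A' where "A' = {i. i < m \<and> rtF i \<in> A}"
      define B' where "B' = {i. i < m \<and> rtF i \<in> B}"
      have iA: "rtF ` A' = A" using AB(1) UW(1) unfolding A'_def roots_def by auto
      have iB: "rtF ` B' = B" using AB(2) UW(2) unfolding B'_def roots_def by auto
      have injr: "inj_on rtF X" for X by (simp add: inj_on_def)
      have cA: "card A' = card A" using iA card_image[OF injr] by metis
      have cB: "card B' = card B" using iB card_image[OF injr] by metis
      have s1: "A' \<subseteq> {..<m}" "B' \<subseteq> {..<m}" by (auto simp: A'_def B'_def)
      have s2: "A' \<inter> B' = {}" using AB(1,2) UW(3) by (auto simp: A'_def B'_def)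
      have s3: "real (card A') > 2 * (real m powr 0.999) / 3" using cA AB(3) by (simp add: k_def)
      have s4: "real (card B') > 2 * (real m powr 0.999) / 3" using cB AB(4) by (simp add: k_def)
      have "\<exists>a\<in>A'. \<exists>b\<in>B'. adj a b"
        using hole[THEN spec, THEN spec, of A' B'] s1 s2 s3 s4 by blast
      then obtain a b where ab: "a \<in> A'" "b \<in> B'" "adj a b" by blast
      have "pseudoedge m (VsF adj) (EsF adj) rtF {rtF a, rtF b}"
        unfolding pseudoedge_F[OF G] using ab by (auto simp: A'_def B'_def)
      moreover have "rtF a \<in> A" "rtF b \<in> B" using ab by (auto simp: A'_def B'_def)
      ultimately show ?thesis by blast
    qed
    have "\<exists>M. (\<forall>e\<in>M. pseudoedge m (VsF adj) (EsF adj) rtF e) \<and> (\<forall>e\<in>M. \<forall>f\<in>M. e \<noteq> f \<longrightarrow> e \<inter> f = {}) \<and>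
     (\<forall>e\<in>M. \<exists>u\<in>U. \<exists>w\<in>W. e = {u, w}) \<and> real (card M) \<ge> k / 3"
    proof (rule greedy_matching)
      show "finite U" "finite W" "U \<inter> W = {}" by (fact fin(1), fact fin(2), fact UW(3))
      show "k \<le> real (card U)" "k \<le> real (card W)" using UW(4,5) by (simp_all add: k_def)
      fix A B assume "A \<subseteq> U" "B \<subseteq> W" "2 * k / 3 < real (card A)" "2 * k / 3 < real (card B)"
      then show "\<exists>a\<in>A. \<exists>b\<in>B. pseudoedge m (VsF adj) (EsF adj) rtF {a, b}" by (rule hl)
    qed
    then obtain M where M: "(\<forall>e\<in>M. pseudoedge m (VsF adj) (EsF adj) rtF e) \<and> (\<forall>e\<in>M. \<forall>f\<in>M. e \<noteq> f \<longrightarrow> e \<inter> f = {}) \<and>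
     (\<forall>e\<in>M. \<exists>u\<in>U. \<exists>w\<in>W. e = {u, w}) \<and> real (card M) \<ge> k / 3" by (rule exE)
    then have "pseudomatching_between m (VsF adj) (EsF adj) rtF U W M" unfolding pseudomatching_between_def
      by (elim conjE) (intro conjI)
    moreover have "real (card M) \<ge> real m powr 0.999 / 3" using M unfolding k_def by (elim conjE)
    ultimately show ?thesis by (intro exI conjI)
  qed
  have pe: "pseudoexpander m (VsF adj) (EsF adj) rtF"
    unfolding pseudoexpander_def
    apply (intro conjI)
      apply (fact btb)
     apply (fact ht)
    apply (intro allI impI)
    apply (elim conjE)
    apply (rule mt)
        apply assumption+
    done
  have "real (pseudodegree m (VsF adj) (EsF adj) rtF t) \<le> D" if tR: "t \<in> roots m rtF" for t
  proof -
    obtain i where i: "i < m" "t = rtF i" using tR unfolding roots_def by blast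
    have "pseudodegree m (VsF adj) (EsF adj) rtF t \<le> card {j. adj i j}" using pdeg_F[OF G i(1)] i(2) by simp
    then show ?thesis using deg by (meson of_nat_le_iff order_trans)
  qed
  then show ?thesis using pe by blast
qed


theorem theorem1:
  shows "\<exists>m0::nat. \<forall>m \<ge> m0. \<exists>(Vs :: nat \<Rightarrow> nat set) (Es :: nat \<Rightarrow> (nat \<times> nat) set) rt.
           pseudoexpander m Vs Es rt \<and>
           (\<forall>t \<in> roots m rt. real (pseudodegree m Vs Es rt t) \<le> real m powr (1 / 4.9))"
proof -
  have ev1: "eventually (\<lambda>x::real. (2/3) * x powr 0.999 / x * (x powr (1/4.9)/2 - 2) > 2 * ln x) at_top"
    by real_asymp
  have ev2: "eventually (\<lambda>x::real. x powr (1/4.9) \<ge> 4) at_top" by real_asymp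
  have ev3: "eventually (\<lambda>x::real. 2/3 * x powr 0.999 + 1 \<le> x) at_top" by real_asymp
  have ev4: "eventually (\<lambda>x::real. 2 \<le> x) at_top" by (rule eventually_ge_at_top)
  have "eventually (\<lambda>x::real. (2/3) * x powr 0.999 / x * (x powr (1/4.9)/2 - 2) > 2 * ln x \<and>
      x powr (1/4.9) \<ge> 4 \<and> 2/3 * x powr 0.999 + 1 \<le> x \<and> 2 \<le> x) at_top"
    using eventually_conj[OF ev1 eventually_conj[OF ev2 eventually_conj[OF ev3 ev4]]] .
  then obtain x0 :: real where x0: "\<And>x. x \<ge> x0 \<Longrightarrow> (2/3) * x powr 0.999 / x * (x powr (1/4.9)/2 - 2) > 2 * ln x \<and>
      x powr (1/4.9) \<ge> 4 \<and> 2/3 * x powr 0.999 + 1 \<le> x \<and> 2 \<le> x"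
    unfolding eventually_at_top_linorder by blast
  show ?thesis
  proof (rule exI[of _ "nat \<lceil>x0\<rceil>"], intro allI impI)
    fix m :: nat assume "m \<ge> nat \<lceil>x0\<rceil>"
    then have "real m \<ge> x0" by linarith
    note xm = x0[OF this]
    define x where "x = real m"
    have E1: "(2/3) * x powr 0.999 / x * (x powr (1/4.9)/2 - 2) > 2 * ln x" using xm by (simp add: x_def)
    have E2: "x powr (1/4.9) \<ge> 4" using xm by (simp add: x_def)
    have E3: "2/3 * x powr 0.999 + 1 \<le> x" using xm by (simp add: x_def)
    have E4: "2 \<le> x" using xm by (simp add: x_def)
    have m2: "2 \<le> m" using E4 by (simp add: x_def)
    have xpos: "x > 0" using E4 by simp
    define k where "k = x powr 0.999"
    define p where "p = x powr (1/4.9)"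
    define s where "s = nat \<lceil>2 * k / 3\<rceil>"
    define d where "d = nat \<lfloor>(p - 2) / 2\<rfloor>"
    have kpos: "k > 0" using xpos by (simp add: k_def)
    have rs: "real s = of_int \<lceil>2 * k / 3\<rceil>" using kpos unfolding s_def by (simp add: ceiling_le_zero not_le)
    have s_lo: "real s \<ge> 2 * k / 3" using rs by linarith
    have s_hi: "real s \<le> 2 * k / 3 + 1" using rs by linarith
    have s1: "1 \<le> s" using s_lo kpos by linarith
    have sm: "s \<le> m" using s_hi E3 unfolding k_def x_def by linarith
    have rd: "real d = of_int \<lfloor>(p - 2) / 2\<rfloor>" using E2 unfolding d_def p_def by simp
    have pe: "(p - 2) / 2 = p / 2 - 1" by simp
    have d_lo: "real d \<ge> p / 2 - 2" using rd real_of_int_floor_gt_diff_one[of "(p - 2) / 2"] unfolding pe by linarith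
    have d_hi: "2 * real d + 2 \<le> p" using rd of_int_floor_le[of "(p - 2) / 2"] unfolding pe by linarith
    have p4: "p \<ge> 4" using E2 by (simp add: p_def)
    have key: "real m ^ 2 * (1 - real s / real m) ^ d < 1"
    proof -
      define q where "q = 1 - real s / real m"
      have q0: "0 \<le> q" using sm m2 by (simp add: q_def field_simps)
      have qe: "q \<le> exp (- (real s / real m))" using exp_ge_add_one_self[of "- (real s / real m)"] by (simp add: q_def)
      have "q ^ d \<le> exp (- (real s / real m)) ^ d" by (rule power_mono[OF qe q0])
      also have "\<dots> = exp (real d * (- (real s / real m)))" by (rule exp_of_nat_mult[symmetric])
      finally have qd: "q ^ d \<le> exp (- (real d * real s / real m))" by simp
      have "(p / 2 - 2) * (2 * k / 3) \<le> real d * real s"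
        using d_lo s_lo p4 kpos by (intro mult_mono) auto
      then have "(p / 2 - 2) * (2 * k / 3) / x \<le> real d * real s / real m"
        using xpos unfolding x_def by (rule divide_right_mono[OF _ less_imp_le])
      moreover have "(2/3) * k / x * (p / 2 - 2) = (p / 2 - 2) * (2 * k / 3) / x" by (simp add: field_simps)
      ultimately have t: "real d * real s / real m > 2 * ln (real m)" using E1 unfolding k_def p_def x_def by linarith
      have l: "ln (real m ^ 2) = 2 * ln (real m)" using m2 by (subst ln_realpow) auto
      have "exp (ln (real m ^ 2)) = real m ^ 2" using m2 by (intro exp_ln) simp
      then have "real m ^ 2 = exp (2 * ln (real m))" using l by simp
      then have "real m ^ 2 * q ^ d \<le> exp (2 * ln (real m)) * exp (- (real d * real s / real m))"
        using qd by (simp add: mult_left_mono)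
      also have "\<dots> = exp (2 * ln (real m) - real d * real s / real m)" by (simp add: exp_diff exp_minus field_simps)
      also have "\<dots> < exp 0" using t by simp
      finally show ?thesis by (simp add: q_def)
    qed
    obtain adj where G: "good_graph m adj" and deg: "\<forall>x. card {y. adj x y} \<le> 2 * d + 2"
      and hole: "\<forall>A B. A \<subseteq> {..<m} \<and> B \<subseteq> {..<m} \<and> A \<inter> B = {} \<and> s \<le> card A \<and> s \<le> card B
        \<longrightarrow> (\<exists>a\<in>A. \<exists>b\<in>B. adj a b)"
      using graph_exists[OF m2 s1 sm key] by blast
    have deg': "\<forall>y. real (card {z. adj y z}) \<le> real m powr (1 / 4.9)"
    proof
      fix y
      have "real (card {z. adj y z}) \<le> real (2 * d + 2)" using deg by (simp only: of_nat_le_iff)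
      also have "\<dots> \<le> p" using d_hi by simp
      finally show "real (card {z. adj y z}) \<le> real m powr (1 / 4.9)" by (simp add: p_def x_def)
    qed
    have hole': "\<forall>A B. A \<subseteq> {..<m} \<and> B \<subseteq> {..<m} \<and> A \<inter> B = {} \<and>
       real (card A) > 2 * (real m powr 0.999) / 3 \<and> real (card B) > 2 * (real m powr 0.999) / 3
       \<longrightarrow> (\<exists>a\<in>A. \<exists>b\<in>B. adj a b)"
    proof (intro allI impI)
      fix A B assume AB: "A \<subseteq> {..<m} \<and> B \<subseteq> {..<m} \<and> A \<inter> B = {} \<and>
       real (card A) > 2 * (real m powr 0.999) / 3 \<and> real (card B) > 2 * (real m powr 0.999) / 3"
      have "s \<le> card A" "s \<le> card B" using AB unfolding s_def k_def x_def
        by (simp_all add: ceiling_le nat_le_iff)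
      then show "\<exists>a\<in>A. \<exists>b\<in>B. adj a b" using hole AB by blast
    qed
    have "pseudoexpander m (VsF adj) (EsF adj) rtF \<and>
      (\<forall>t \<in> roots m rtF. real (pseudodegree m (VsF adj) (EsF adj) rtF t) \<le> real m powr (1 / 4.9))"
      by (rule construction[OF G _ deg' hole']) (use m2 in simp)
    then show "\<exists>(Vs :: nat \<Rightarrow> nat set) (Es :: nat \<Rightarrow> (nat \<times> nat) set) rt.
           pseudoexpander m Vs Es rt \<and>
           (\<forall>t \<in> roots m rt. real (pseudodegree m Vs Es rt t) \<le> real m powr (1 / 4.9))" by blast
  qed
qed

end
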